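(* Let $n\ge 2$. Then $\max\{d_W(\sigma,\rho) : \sigma,\rho\in P^B(\emptyset;n)\} = n^2$.
   Context: $S^B_n$ is the set of bijections $\sigma$ of $\{-n,\dots,-1,1,\dots,n\}$ with $\sigma(-i)=-\sigma(i)$ for all $i$, with multiplication given by composition; a signed permutation is written in one-line notation $\sigma(1)\cdots\sigma(n)$. A signed permutation $\sigma$ has a peak at index $i\in\{2,\dots,n-1\}$ if $\sigma(i-1)<\sigma(i)>\sigma(i+1)$ (usual order on integers). $Peak(\sigma)$ is the set of indices where $\sigma$ has a peak, and for $S\subseteq[n]$, $P^B(S;n)=\{\sigma\in S^B_n : Peak(\sigma)=S\}$. The word metric is $d_W(\sigma,\rho)=\ell_B(\rho^{-1}\sigma)$, where $\ell_B(\gamma)$ is the minimum number of factors in an expression of $\gamma$ as a product of the Coxeter generators $s_0^B,\dots,s_{n-1}^B$; here $s_0^B$ swaps $1$ and $-1$ and fixes all other values, and for $1\le i<n$, $s_i^B$ swaps $i$ with $i+1$ and $-i$ with $-(i+1)$, fixing everything else. *)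

theory Defs
  imports Main
begin

text \<open>Signed permutations of {-n..-1,1..n}, represented as functions int => int
  that are the identity outside this domain.\<close>

definition signed_dom :: "nat \<Rightarrow> int set" where
  "signed_dom n = {-int n..-1} \<union> {1..int n}"

definition SB :: "nat \<Rightarrow> (int \<Rightarrow> int) set" where
  "SB n = {\<sigma>. bij_betw \<sigma> (signed_dom n) (signed_dom n)
              \<and> (\<forall>i\<in>signed_dom n. \<sigma> (-i) = - \<sigma> i)
              \<and> (\<forall>x. x \<notin> signed_dom n \<longrightarrow> \<sigma> x = x)}"

definition sB :: "nat \<Rightarrow> int \<Rightarrow> int" where
  "sB i x =
     (if i = 0 then (if x = 1 then -1 else if x = -1 then 1 else x)
      else let a = int i in
        (if x = a then a + 1 else if x = a + 1 then a
         else if x = -a then -(a + 1) else if x = -(a + 1) then -a else x))"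

definition lenB :: "nat \<Rightarrow> (int \<Rightarrow> int) \<Rightarrow> nat" where
  "lenB n \<gamma> = (LEAST k. \<exists>ws. length ws = k \<and> set ws \<subseteq> {0..<n}
                  \<and> \<gamma> = foldr (\<lambda>i f. sB i \<circ> f) ws id)"

definition dW :: "nat \<Rightarrow> (int \<Rightarrow> int) \<Rightarrow> (int \<Rightarrow> int) \<Rightarrow> nat" where
  "dW n \<sigma> \<rho> = lenB n (inv \<rho> \<circ> \<sigma>)"

definition Peak :: "nat \<Rightarrow> (int \<Rightarrow> int) \<Rightarrow> nat set" where
  "Peak n \<sigma> = {i \<in> {2..n-1}. \<sigma> (int i - 1) < \<sigma> (int i) \<and> \<sigma> (int i) > \<sigma> (int i + 1)}"

definition PB :: "nat set \<Rightarrow> nat \<Rightarrow> (int \<Rightarrow> int) set" where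
  "PB S n = {\<sigma> \<in> SB n. Peak n \<sigma> = S}"

end

theory Submission
  imports Defs
begin

lemma dom_iff: "x \<in> signed_dom n \<longleftrightarrow> x \<noteq> 0 \<and> \<bar>x\<bar> \<le> int n"
  unfolding signed_dom_def by auto

lemma sB_invol: "sB i (sB i x) = x"
  unfolding sB_def Let_def by auto

lemma sB_comp_invol: "sB i \<circ> (sB i \<circ> g) = g"
  by (auto simp: sB_invol)

lemma sB_0[simp]: "sB i 0 = 0"
  unfolding sB_def Let_def by auto

lemma sB_neg: "sB i (-x) = - sB i x"
  unfolding sB_def Let_def by auto

lemma sB_dom: "i < n \<Longrightarrow> (sB i x \<in> signed_dom n) = (x \<in> signed_dom n)"
  unfolding sB_def Let_def dom_iff by auto

lemma sB_out: "i < n \<Longrightarrow> x \<notin> signed_dom n \<Longrightarrow> sB i x = x"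
  unfolding sB_def Let_def dom_iff by auto

definition V :: "nat \<Rightarrow> (int \<times> int) set" where
  "V i = (if i = 0 then {(1,-1),(-1,1)} else
     {(int i, int i+1),(int i+1, int i),(-int i, -int i-1),(-int i-1,-int i)})"

lemma aux1: "(a::int) \<ge> 1 \<Longrightarrow> x < y \<Longrightarrow>
   \<not> (x = a \<and> y = a+1) \<Longrightarrow> \<not> (x = -a-1 \<and> y = -a) \<Longrightarrow>
   (if x = a then a + 1 else if x = a + 1 then a
         else if x = -a then -(a + 1) else if x = -(a + 1) then -a else x) <
   (if y = a then a + 1 else if y = a + 1 then a
         else if y = -a then -(a + 1) else if y = -(a + 1) then -a else y)"
  using [[linarith_neq_limit=3]] by (auto split: if_splits)

lemma sB_order_aux: "(a::int) \<ge> 1 \<Longrightarrow> x \<noteq> y \<Longrightarrow>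
   \<not> (x = a \<and> y = a+1) \<Longrightarrow> \<not> (x = a+1 \<and> y = a) \<Longrightarrow> \<not> (x = -a \<and> y = -a-1) \<Longrightarrow> \<not> (x = -a-1 \<and> y = -a) \<Longrightarrow>
   (x<y) = ((if x = a then a + 1 else if x = a + 1 then a
         else if x = -a then -(a + 1) else if x = -(a + 1) then -a else x) <
   (if y = a then a + 1 else if y = a + 1 then a
         else if y = -a then -(a + 1) else if y = -(a + 1) then -a else y))"
  using aux1[of a x y] aux1[of a y x] by (cases "x < y") auto

lemma sB_order: "x \<noteq> 0 \<Longrightarrow> y \<noteq> 0 \<Longrightarrow> x \<noteq> y \<Longrightarrow> (x,y) \<notin> V i \<Longrightarrow> (x<y) = (sB i x < sB i y)"
proof (cases "i = 0")
  case True
  assume "x \<noteq> 0" "y \<noteq> 0" "x \<noteq> y" "(x,y) \<notin> V i"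
  then show ?thesis using True unfolding sB_def V_def by auto
next
  case False
  assume h: "x \<noteq> 0" "y \<noteq> 0" "x \<noteq> y" "(x,y) \<notin> V i"
  have "int i \<ge> 1" using False by simp
  from sB_order_aux[OF this h(3)] h(4) False show ?thesis unfolding sB_def V_def Let_def by auto
qed

lemma sB_sign: "i \<noteq> 0 \<Longrightarrow> (sB i x < 0) = (x<0)"
  unfolding sB_def Let_def by auto

lemma sB0_sign: "sB 0 x < 0 \<Longrightarrow> x < 0 \<or> x = 1"
  unfolding sB_def Let_def by (auto split: if_splits)

lemma card_V: "card (V i) \<le> (if i = 0 then 2 else 4)"
proof -
  have c: "card (insert a A) \<le> Suc (card A)" for a and A :: "(int\<times>int) set" by (simp add: card_insert_le_m1 card_insert_if)
  show ?thesis unfolding V_def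
    using c[of "(int i, int i+1)" "{(int i+1, int i),(-int i, -int i-1),(-int i-1,-int i)}"]
      c[of "(int i+1, int i)" "{(-int i, -int i-1),(-int i-1,-int i)}"]
      c[of "(-int i, -int i-1)" "{(-int i-1,-int i)}"]
    by auto
qed


lemma finite_dom: "finite (signed_dom n)"
  unfolding signed_dom_def by auto

definition I2 :: "nat \<Rightarrow> (int \<Rightarrow> int) \<Rightarrow> (int \<times> int) set" where
  "I2 n g = {(a,b). a \<in> signed_dom n \<and> b \<in> signed_dom n \<and> a \<noteq> b \<and> (a<b) \<noteq> (g a < g b)}"

definition negs :: "nat \<Rightarrow> (int \<Rightarrow> int) \<Rightarrow> int set" where
  "negs n g = {b \<in> {1..int n}. g b < 0}"

definition Phi :: "nat \<Rightarrow> (int \<Rightarrow> int) \<Rightarrow> nat" where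
  "Phi n g = card (I2 n g) + 2 * card (negs n g)"

lemma I2_sub: "I2 n g \<subseteq> signed_dom n \<times> signed_dom n"
  unfolding I2_def by auto

lemma finite_I2: "finite (I2 n g)"
  using I2_sub finite_dom by (meson finite_SigmaI finite_subset)

lemma finite_negs: "finite (negs n g)"
  unfolding negs_def by (rule finite_subset[of _ "{1..int n}"]) auto

lemma I2_step:
  assumes "inj g" "g 0 = 0"
  shows "card (I2 n (sB i \<circ> g)) \<le> card (I2 n g) + card (V i)"
proof -
  let ?D = "signed_dom n"
  let ?F = "{(a,b). (g a, g b) \<in> V i} \<inter> (?D \<times> ?D)"
  have sub: "I2 n (sB i \<circ> g) \<subseteq> I2 n g \<union> ?F"
  proof
    fix x assume x: "x \<in> I2 n (sB i \<circ> g)"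
    obtain a b where ab: "x = (a,b)" by force
    have a: "a \<in> ?D" "b \<in> ?D" "a \<noteq> b" "(a<b) \<noteq> (sB i (g a) < sB i (g b))"
      using x ab unfolding I2_def by auto
    have nz: "g a \<noteq> 0" "g b \<noteq> 0" "g a \<noteq> g b"
      using a assms by (auto simp: dom_iff inj_eq dest: injD[of g a 0] injD[of g b 0])
    show "x \<in> I2 n g \<union> ?F"
    proof (cases "(g a, g b) \<in> V i")
      case True then show ?thesis using ab a by auto
    next
      case False
      from sB_order[OF nz False] a ab show ?thesis unfolding I2_def by auto
    qed
  qed
  have fD: "finite (signed_dom n \<times> signed_dom n)" using finite_dom finite_cartesian_product by blast
  have fF: "finite ?F" by (rule rev_finite_subset[OF fD Int_lower2])
  have cF: "card ?F \<le> card (V i)"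
  proof (rule card_inj_on_le[where f = "map_prod g g"])
    have "inj (map_prod g g)" using assms(1) by (rule prod.inj_map[OF _ assms(1)])
    then show "inj_on (map_prod g g) ?F" by (rule inj_on_subset) simp
    show "map_prod g g ` ?F \<subseteq> V i" by force
    show "finite (V i)" unfolding V_def by simp
  qed
  have "card (I2 n (sB i \<circ> g)) \<le> card (I2 n g \<union> ?F)"
    using sub finite_I2 fF by (intro card_mono) auto
  also have "\<dots> \<le> card (I2 n g) + card ?F" by (rule card_Un_le)
  finally show ?thesis using cF by linarith
qed

lemma negs_step:
  assumes "inj g"
  shows "card (negs n (sB i \<circ> g)) \<le> card (negs n g) + (if i = 0 then 1 else 0)"
proof (cases "i = 0")
  case False
  then have "negs n (sB i \<circ> g) = negs n g" unfolding negs_def using sB_sign by auto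
  then show ?thesis by simp
next
  case True
  let ?G = "{b \<in> {1..int n}. g b = 1}"
  have "negs n (sB i \<circ> g) \<subseteq> negs n g \<union> ?G"
    unfolding negs_def using sB0_sign True by auto
  then have "card (negs n (sB i \<circ> g)) \<le> card (negs n g \<union> ?G)"
    using finite_negs by (intro card_mono) (auto intro: finite_subset[of _ "{1..int n}"])
  also have "\<dots> \<le> card (negs n g) + card ?G" by (rule card_Un_le)
  also have "card ?G \<le> 1"
  proof -
    have fin: "finite ?G" by (rule finite_subset[of _ "{1..int n}"]) auto
    have "\<forall>a\<in>?G. \<forall>b\<in>?G. a = b"
    proof (intro ballI)
      fix a b assume "a \<in> ?G" "b \<in> ?G"
      then have "g a = g b" by simp
      then show "a = b" using assms injD by metis
    qed
    then show ?thesis using card_le_Suc0_iff_eq[OF fin] by simp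
  qed
  finally show ?thesis using True by simp
qed

lemma Phi_step:
  assumes "inj g" "g 0 = 0"
  shows "Phi n (sB i \<circ> g) \<le> Phi n g + 4"
  using I2_step[OF assms, of n i] negs_step[OF assms(1), of n i] card_V[of i]
  unfolding Phi_def by (auto split: if_splits)

abbreviation W :: "nat list \<Rightarrow> int \<Rightarrow> int" where
  "W ws \<equiv> foldr (\<lambda>i f. sB i \<circ> f) ws id"

lemma inj_sB: "inj (sB i)"
  by (metis injI sB_invol)

lemma inj_sB_comp: "inj f \<Longrightarrow> inj (\<lambda>b. sB i (f b))"
  unfolding inj_def by (metis sB_invol)

lemma W_props: "inj (W ws) \<and> W ws 0 = 0"
  by (induction ws) (auto simp: inj_sB_comp)

lemma Phi_id: "Phi n id = 0"
proof -
  have "I2 n id = {}" "negs n id = {}" unfolding I2_def negs_def by auto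
  then show ?thesis unfolding Phi_def by (metis card.empty add_0 mult_0_right)
qed

lemma Phi_W: "Phi n (W ws) \<le> 4 * length ws"
proof (induction ws)
  case Nil then show ?case using Phi_id[of n] by (simp add: id_def)
next
  case (Cons i ws)
  have "Phi n (W (i # ws)) = Phi n (sB i \<circ> W ws)" by simp
  also have "\<dots> \<le> Phi n (W ws) + 4" using W_props[of ws] Phi_step by blast
  finally have "Phi n (W (i # ws)) \<le> Phi n (W ws) + 4" .
  then show ?case using Cons.IH by (simp only: length_Cons mult_Suc_right; linarith)
qed


lemma SB_D: assumes "g \<in> SB n"
  shows "bij_betw g (signed_dom n) (signed_dom n)" "\<And>i. i \<in> signed_dom n \<Longrightarrow> g (-i) = - g i"
    "\<And>x. x \<notin> signed_dom n \<Longrightarrow> g x = x"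
  using assms unfolding SB_def by auto

lemma SB_in: "g \<in> signed_dom n \<Longrightarrow> x \<in> signed_dom n \<Longrightarrow> True" by simp

lemma SB_mapsto: "g \<in> SB n \<Longrightarrow> x \<in> signed_dom n \<Longrightarrow> g x \<in> signed_dom n"
  using SB_D(1) bij_betwE by blast

lemma SB_inj: "g \<in> SB n \<Longrightarrow> x \<in> signed_dom n \<Longrightarrow> y \<in> signed_dom n \<Longrightarrow> g x = g y \<Longrightarrow> x = y"
  using SB_D(1) bij_betw_imp_inj_on inj_onD by metis

lemma neg_dom: "(-x \<in> signed_dom n) = (x \<in> signed_dom n)"
  unfolding dom_iff by auto

lemma SB_comp: assumes "f \<in> SB n" "g \<in> SB n" shows "f \<circ> g \<in> SB n"
  unfolding SB_def
proof (intro CollectI conjI ballI allI impI)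
  show "bij_betw (f \<circ> g) (signed_dom n) (signed_dom n)"
    using SB_D(1)[OF assms(1)] SB_D(1)[OF assms(2)] bij_betw_trans by blast
  fix i assume "i \<in> signed_dom n"
  then show "(f \<circ> g) (- i) = - (f \<circ> g) i"
    using SB_D(2)[OF assms(1)] SB_D(2)[OF assms(2)] SB_mapsto[OF assms(2)] by simp
next
  fix x assume "x \<notin> signed_dom n"
  then show "(f \<circ> g) x = x" using SB_D(3)[OF assms(1)] SB_D(3)[OF assms(2)] by simp
qed

lemma sB_SB: assumes "i < n" shows "sB i \<in> SB n"
  unfolding SB_def
proof (intro CollectI conjI ballI allI impI)
  show "bij_betw (sB i) (signed_dom n) (signed_dom n)"
    by (rule bij_betw_byWitness[where f' = "sB i"]) (auto simp: sB_invol sB_dom[OF assms])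
  show "sB i (- x) = - sB i x" for x by (rule sB_neg)
  show "x \<notin> signed_dom n \<Longrightarrow> sB i x = x" for x using sB_out[OF assms] by blast
qed

lemma SB_step: "g \<in> SB n \<Longrightarrow> i < n \<Longrightarrow> sB i \<circ> g \<in> SB n"
  using SB_comp sB_SB by blast

lemma descent_pos:
  assumes g: "g \<in> SB n" and i: "1 \<le> i" "i < n" and pq: "p \<in> signed_dom n" "q \<in> signed_dom n" "p < q"
    and gp: "g p = int i + 1" and gq: "g q = int i"
  shows "Phi n (sB i \<circ> g) + 4 \<le> Phi n g"
proof -
  let ?D = "signed_dom n"
  let ?E = "{(p,q),(q,p),(-p,-q),(-q,-p)}"
  have mp: "-p \<in> ?D" "-q \<in> ?D" using pq neg_dom by blast+
  have gmp: "g (-p) = - int i - 1" "g (-q) = - int i" using SB_D(2)[OF g] pq gp gq by auto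
  have nz: "p \<noteq> 0" "q \<noteq> 0" using pq dom_iff by auto
  have pnq: "p \<noteq> -q" using gp gmp by auto
  have cE: "card ?E = 4" using nz pnq pq(3) by (auto simp: card_insert_if)
  have EI: "?E \<subseteq> I2 n g" unfolding I2_def using pq mp gp gq gmp pnq by auto
  have sB1: "sB i (int i) = int i + 1" "sB i (int i + 1) = int i" "sB i (- int i) = - int i - 1"
    "sB i (- int i - 1) = - int i" using i unfolding sB_def Let_def by auto
  have sub: "I2 n (sB i \<circ> g) \<subseteq> I2 n g - ?E"
  proof
    fix x assume x: "x \<in> I2 n (sB i \<circ> g)"
    obtain a b where ab: "x = (a,b)" by force
    have a: "a \<in> ?D" "b \<in> ?D" "a \<noteq> b" "(a<b) \<noteq> (sB i (g a) < sB i (g b))"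
      using x ab unfolding I2_def by auto
    have notE: "(a,b) \<notin> ?E"
    proof
      assume "(a,b) \<in> ?E"
      then show False using a(4) gp gq gmp sB1 pq(3) by auto
    qed
    have gnz: "g a \<noteq> 0" "g b \<noteq> 0" using SB_mapsto[OF g] a dom_iff by blast+
    have gab: "g a \<noteq> g b" using SB_inj[OF g] a by blast
    have nV: "(g a, g b) \<notin> V i"
    proof
      assume "(g a, g b) \<in> V i"
      then have "(g a = g q \<and> g b = g p) \<or> (g a = g p \<and> g b = g q) \<or> (g a = g (-q) \<and> g b = g (-p))
         \<or> (g a = g (-p) \<and> g b = g (-q))"
        using i gp gq gmp unfolding V_def by auto
      then have "(a,b) \<in> ?E" using SB_inj[OF g] a pq mp by blast
      then show False using notE by blast
    qed
    from sB_order[OF gnz gab nV] a notE ab show "x \<in> I2 n g - ?E" unfolding I2_def by auto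
  qed
  have "card (I2 n (sB i \<circ> g)) \<le> card (I2 n g - ?E)"
    using sub finite_I2 by (intro card_mono) auto
  also have "\<dots> = card (I2 n g) - 4" using EI cE finite_I2 by (simp add: card_Diff_subset)
  finally have c1: "card (I2 n (sB i \<circ> g)) \<le> card (I2 n g) - 4" .
  have c0: "card (I2 n g) \<ge> 4" using EI cE finite_I2 card_mono by metis
  have "negs n (sB i \<circ> g) = negs n g" unfolding negs_def using sB_sign i by auto
  then show ?thesis using c1 c0 unfolding Phi_def by simp
qed

lemma descent_zero:
  assumes g: "g \<in> SB n" and p: "p \<in> {1..int n}" and gp: "g p = -1" and n: "0 < n"
  shows "Phi n (sB 0 \<circ> g) + 4 \<le> Phi n g"
proof -
  let ?D = "signed_dom n"
  let ?E = "{(p,-p),(-p,p)}"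
  have pd: "p \<in> ?D" "-p \<in> ?D" using p dom_iff by auto
  have gmp: "g (-p) = 1" using SB_D(2)[OF g] pd gp by auto
  have cE: "card ?E = 2" using p by auto
  have EI: "?E \<subseteq> I2 n g" unfolding I2_def using pd gp gmp p by auto
  have s0: "sB 0 1 = -1" "sB 0 (-1) = 1" unfolding sB_def by auto
  have sub: "I2 n (sB 0 \<circ> g) \<subseteq> I2 n g - ?E"
  proof
    fix x assume x: "x \<in> I2 n (sB 0 \<circ> g)"
    obtain a b where ab: "x = (a,b)" by force
    have a: "a \<in> ?D" "b \<in> ?D" "a \<noteq> b" "(a<b) \<noteq> (sB 0 (g a) < sB 0 (g b))"
      using x ab unfolding I2_def by auto
    have notE: "(a,b) \<notin> ?E"
    proof
      assume "(a,b) \<in> ?E"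
      then show False using a(4) gp gmp s0 p by auto
    qed
    have gnz: "g a \<noteq> 0" "g b \<noteq> 0" using SB_mapsto[OF g] a dom_iff by blast+
    have gab: "g a \<noteq> g b" using SB_inj[OF g] a by blast
    have nV: "(g a, g b) \<notin> V 0"
    proof
      assume "(g a, g b) \<in> V 0"
      then have "(g a = g (-p) \<and> g b = g p) \<or> (g a = g p \<and> g b = g (-p))"
        using gp gmp unfolding V_def by auto
      then have "(a,b) \<in> ?E" using SB_inj[OF g] a pd by blast
      then show False using notE by blast
    qed
    from sB_order[OF gnz gab nV] a notE ab show "x \<in> I2 n g - ?E" unfolding I2_def by auto
  qed
  have "card (I2 n (sB 0 \<circ> g)) \<le> card (I2 n g - ?E)"
    using sub finite_I2 by (intro card_mono) auto
  also have "\<dots> = card (I2 n g) - 2" using EI cE finite_I2 by (simp add: card_Diff_subset)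
  finally have c1: "card (I2 n (sB 0 \<circ> g)) \<le> card (I2 n g) - 2" .
  have c0: "card (I2 n g) \<ge> 2" using EI cE finite_I2 card_mono by metis
  have nsub: "negs n (sB 0 \<circ> g) \<subseteq> negs n g - {p}"
  proof
    fix b assume b: "b \<in> negs n (sB 0 \<circ> g)"
    then have b1: "b \<in> {1..int n}" "sB 0 (g b) < 0" unfolding negs_def by auto
    have "b \<noteq> p" using b1 gp s0 by auto
    moreover have "g b \<noteq> 1"
    proof
      assume "g b = 1"
      then have "b = -p" using SB_inj[OF g, of b "-p"] gmp b1 pd dom_iff by auto
      then show False using b1 p by auto
    qed
    ultimately show "b \<in> negs n g - {p}" using sB0_sign[OF b1(2)] b1 unfolding negs_def by auto
  qed
  have pn: "p \<in> negs n g" using p gp unfolding negs_def by auto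
  have "card (negs n (sB 0 \<circ> g)) \<le> card (negs n g - {p})"
    using nsub finite_negs by (intro card_mono) auto
  also have "\<dots> = card (negs n g) - 1" using pn finite_negs by simp
  finally have c2: "card (negs n (sB 0 \<circ> g)) \<le> card (negs n g) - 1" .
  have c3: "card (negs n g) \<ge> 1" using pn finite_negs
    by (metis One_nat_def Suc_leI card_gt_0_iff empty_iff)
  show ?thesis using c1 c0 c2 c3 unfolding Phi_def by linarith
qed


lemma exists_descent:
  assumes g: "g \<in> SB n" and ne: "g \<noteq> id"
  shows "(\<exists>p\<in>{1..int n}. g p = -1) \<or>
    (\<exists>i p q. 1 \<le> i \<and> i < n \<and> p \<in> signed_dom n \<and> q \<in> signed_dom n \<and> p < q \<and> g p = int i + 1 \<and> g q = int i)"
proof (rule ccontr)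
  let ?D = "signed_dom n"
  assume c: "\<not> ?thesis"
  have surj: "g ` ?D = ?D" using SB_D(1)[OF g] by (rule bij_betw_imp_surj_on)
  have "\<forall>k\<in>{1..n}. \<exists>p. p \<in> ?D \<and> g p = int k"
  proof
    fix k assume "k \<in> {1..n}"
    then have "int k \<in> ?D" using dom_iff by auto
    then show "\<exists>p. p \<in> ?D \<and> g p = int k" using surj by (metis imageE)
  qed
  then obtain pos where pos: "\<And>k. k \<in> {1..n} \<Longrightarrow> pos k \<in> ?D \<and> g (pos k) = int k" by metis
  have p1: "pos 1 > 0" if "1 \<le> n"
  proof (rule ccontr)
    assume "\<not> pos 1 > 0"
    moreover have "pos 1 \<in> ?D" "g (pos 1) = 1" using pos[of 1] that by auto
    ultimately have "- pos 1 \<in> {1..int n}" "g (- pos 1) = -1"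
      using dom_iff SB_D(2)[OF g] by auto
    then show False using c by blast
  qed
  have mono: "pos k < pos (Suc k)" if k: "1 \<le> k" "k < n" for k
  proof -
    have a: "pos k \<in> ?D" "g (pos k) = int k" "pos (Suc k) \<in> ?D" "g (pos (Suc k)) = int k + 1"
      using pos[of k] pos[of "Suc k"] k by auto
    then have "pos k \<noteq> pos (Suc k)" by auto
    moreover have "\<not> pos (Suc k) < pos k" using c k a by blast
    ultimately show ?thesis by linarith
  qed
  have lo: "int k \<le> pos k" if "1 \<le> k" "k \<le> n" for k
    using that
  proof (induction k)
    case 0 then show ?case by simp
  next
    case (Suc k)
    show ?case
    proof (cases "k = 0")
      case True then show ?thesis using p1 Suc by simp
    next
      case False
      then have "int k \<le> pos k" using Suc by simp
      moreover have "pos k < pos (Suc k)" using mono[of k] Suc False by simp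
      ultimately show ?thesis by simp
    qed
  qed
  have hi: "pos k \<le> int k" if "1 \<le> k" "k \<le> n" for k
    using that
  proof (induction "n - k" arbitrary: k)
    case 0
    then have "k = n" by simp
    then show ?case using pos[of k] 0 dom_iff by auto
  next
    case (Suc m)
    then have h: "m = n - Suc k" "1 \<le> Suc k" "Suc k \<le> n" by auto
    have "pos (Suc k) \<le> int (Suc k)" by (rule Suc(1)[OF h])
    moreover have "pos k < pos (Suc k)" using mono[of k] Suc by simp
    ultimately show ?case by simp
  qed
  have fix1: "g (int k) = int k" if "1 \<le> k" "k \<le> n" for k
    using lo[OF that] hi[OF that] pos[of k] that by (metis antisym atLeastAtMost_iff)
  have "g = id"
  proof
    fix x
    show "g x = id x"
    proof (cases "x \<in> ?D")
      case False then show ?thesis using SB_D(3)[OF g] by simp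
    next
      case True
      show ?thesis
      proof (cases "x > 0")
        case True
        then show ?thesis using fix1[of "nat x"] \<open>x \<in> ?D\<close> dom_iff by auto
      next
        case False
        then have "-x \<in> ?D" "-x > 0" using \<open>x \<in> ?D\<close> dom_iff by auto
        then have "g (-x) = -x" using fix1[of "nat (-x)"] dom_iff by auto
        then show ?thesis using SB_D(2)[OF g \<open>-x \<in> ?D\<close>] by simp
      qed
    qed
  qed
  then show False using ne by blast
qed

lemma word_exists: "g \<in> SB n \<Longrightarrow> \<exists>ws. 4 * length ws \<le> Phi n g \<and> set ws \<subseteq> {0..<n} \<and> g = W ws"
proof (induction "Phi n g" arbitrary: g rule: less_induct)
  case less
  show ?case
  proof (cases "g = id")
    case True then show ?thesis by (intro exI[of _ "[]"]) simp
  next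
    case False
    have "\<exists>i<n. Phi n (sB i \<circ> g) + 4 \<le> Phi n g"
    proof (cases "\<exists>p\<in>{1..int n}. g p = -1")
      case True
      then obtain p where p: "p \<in> {1..int n}" "g p = -1" by blast
      then have "0 < n" by auto
      then show ?thesis using descent_zero[OF less.prems p] by blast
    next
      case F: False
      then obtain i p q where "1 \<le> i" "i < n" "p \<in> signed_dom n" "q \<in> signed_dom n" "p < q"
        "g p = int i + 1" "g q = int i"
        using exists_descent[OF less.prems False] by blast
      then show ?thesis using descent_pos[OF less.prems] by blast
    qed
    then obtain i where i: "i < n" "Phi n (sB i \<circ> g) + 4 \<le> Phi n g" by blast
    have "sB i \<circ> g \<in> SB n" using SB_step less.prems i by blast
    then obtain ws where ws: "4 * length ws \<le> Phi n (sB i \<circ> g)" "set ws \<subseteq> {0..<n}" "sB i \<circ> g = W ws"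
      using less.hyps[of "sB i \<circ> g"] i by auto
    have "W (i # ws) = g" using ws(3) sB_comp_invol[of i g] by (metis foldr_Cons o_apply)
    then show ?thesis using ws i by (intro exI[of _ "i # ws"]) auto
  qed
qed

definition offd :: "nat \<Rightarrow> (int \<times> int) set" where
  "offd n = {(a,b). a \<in> signed_dom n \<and> b \<in> signed_dom n \<and> a \<noteq> b}"

lemma card_dom: "card (signed_dom n) = 2 * n"
proof -
  have "card ({-int n..-1} \<union> {1..int n}) = card {-int n..-1} + card {1..int n}"
    by (rule card_Un_disjoint) auto
  then show ?thesis unfolding signed_dom_def by simp
qed

lemma card_offd: "card (offd n) = 4 * n^2 - 2 * n"
proof -
  let ?D = "signed_dom n"
  have e: "offd n = ?D \<times> ?D - (\<lambda>a. (a,a)) ` ?D" unfolding offd_def by auto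
  have "card ((\<lambda>a. (a,a)) ` ?D) = card ?D" by (rule card_image) (auto simp: inj_on_def)
  moreover have "card (?D \<times> ?D) = card ?D * card ?D" by (rule card_cartesian_product)
  moreover have "card (?D \<times> ?D - (\<lambda>a. (a,a)) ` ?D) = card (?D \<times> ?D) - card ((\<lambda>a. (a,a)) ` ?D)"
    by (rule card_Diff_subset) (auto simp: finite_dom)
  ultimately show ?thesis using e card_dom[of n] by (simp add: power2_eq_square)
qed

lemma Phi_le: "Phi n g \<le> 4 * n^2"
proof -
  have fo: "finite (offd n)" unfolding offd_def
    by (rule rev_finite_subset[of "signed_dom n \<times> signed_dom n"]) (auto simp: finite_dom)
  have "card (I2 n g) \<le> card (offd n)" using fo by (intro card_mono) (auto simp: I2_def offd_def)
  moreover have "card (negs n g) \<le> card {1..int n}" by (intro card_mono) (auto simp: negs_def)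
  moreover have "2 * n \<le> 4 * n^2" by (simp add: power2_eq_square)
  ultimately show ?thesis unfolding Phi_def using card_offd[of n] by simp
qed

definition w0 :: "nat \<Rightarrow> int \<Rightarrow> int" where
  "w0 n x = (if x \<in> signed_dom n then -x else x)"

lemma Phi_w0: "Phi n (w0 n) = 4 * n^2"
proof -
  have "I2 n (w0 n) = offd n" unfolding I2_def offd_def w0_def by auto
  moreover have "negs n (w0 n) = {1..int n}" unfolding negs_def w0_def dom_iff by auto
  moreover have "2 * n \<le> 4 * n^2" by (simp add: power2_eq_square)
  ultimately show ?thesis unfolding Phi_def using card_offd[of n] by simp
qed

lemma w0_SB: "w0 n \<in> SB n"
  unfolding SB_def
proof (intro CollectI conjI ballI allI impI)
  show "bij_betw (w0 n) (signed_dom n) (signed_dom n)"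
    by (rule bij_betw_byWitness[where f' = "w0 n"]) (auto simp: w0_def neg_dom)
  show "w0 n (- i) = - w0 n i" if "i \<in> signed_dom n" for i using that by (simp add: w0_def neg_dom)
  show "x \<notin> signed_dom n \<Longrightarrow> w0 n x = x" for x by (simp add: w0_def)
qed

lemma id_SB: "id \<in> SB n"
  unfolding SB_def by auto

lemma lenB_le: assumes "g \<in> SB n" shows "lenB n g \<le> n^2"
proof -
  obtain ws where ws: "4 * length ws \<le> Phi n g" "set ws \<subseteq> {0..<n}" "g = W ws"
    using word_exists[OF assms] by blast
  have "lenB n g \<le> length ws" unfolding lenB_def
    by (rule Least_le) (use ws in blast)
  then show ?thesis using ws(1) Phi_le[of n g] by linarith
qed

lemma lenB_ge: assumes "g \<in> SB n" shows "Phi n g \<le> 4 * lenB n g"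
proof -
  obtain ws where ws: "set ws \<subseteq> {0..<n}" "g = W ws"
    using word_exists[OF assms] by blast
  have "\<exists>ws. length ws = lenB n g \<and> set ws \<subseteq> {0..<n} \<and> g = W ws" unfolding lenB_def
    by (rule LeastI_ex) (use ws in blast)
  then obtain vs where "length vs = lenB n g" "g = W vs" by blast
  then show ?thesis using Phi_W[of n vs] by simp
qed

lemma SB_inv: assumes r: "r \<in> SB n" shows "inv r \<in> SB n"
proof -
  let ?D = "signed_dom n"
  have rD: "\<And>x. x \<in> ?D \<Longrightarrow> r x \<in> ?D" using SB_mapsto[OF r] .
  have injr: "inj r"
  proof (rule injI)
    fix x y assume e: "r x = r y"
    show "x = y"
    proof (cases "x \<in> ?D"; cases "y \<in> ?D")
      assume "x \<in> ?D" "y \<in> ?D" then show ?thesis using SB_inj[OF r] e by blast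
    next
      assume "x \<in> ?D" "y \<notin> ?D" then show ?thesis using rD SB_D(3)[OF r] e by metis
    next
      assume "x \<notin> ?D" "y \<in> ?D" then show ?thesis using rD SB_D(3)[OF r] e by metis
    next
      assume "x \<notin> ?D" "y \<notin> ?D" then show ?thesis using SB_D(3)[OF r] e by metis
    qed
  qed
  have surjr: "surj r"
  proof -
    have "y \<in> range r" for y
    proof (cases "y \<in> ?D")
      case True
      then have "y \<in> r ` ?D" using bij_betw_imp_surj_on[OF SB_D(1)[OF r]] by simp
      then show ?thesis by blast
    next
      case False then show ?thesis using SB_D(3)[OF r] by (metis rangeI)
    qed
    then show ?thesis by blast
  qed
  let ?h = "inv r"
  have rh: "r (?h y) = y" for y using surjr surj_f_inv_f by metis
  have hr: "?h (r x) = x" for x using injr inv_f_f by metis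
  have hD: "?h x \<in> ?D" if "x \<in> ?D" for x
  proof (rule ccontr)
    assume "?h x \<notin> ?D"
    then have "r (?h x) = ?h x" using SB_D(3)[OF r] by blast
    then show False using rh[of x] that \<open>?h x \<notin> ?D\<close> by simp
  qed
  show ?thesis unfolding SB_def
  proof (intro CollectI conjI ballI allI impI)
    show "bij_betw ?h ?D ?D"
      by (rule bij_betw_byWitness[where f' = r]) (auto simp: rh hr hD rD)
    show "?h (- i) = - ?h i" if "i \<in> ?D" for i
    proof -
      have "r (- ?h i) = - r (?h i)" using SB_D(2)[OF r hD[OF that]] .
      then have "r (- ?h i) = - i" using rh by simp
      then show ?thesis using hr by metis
    qed
    show "?h x = x" if "x \<notin> ?D" for x using hr[of x] SB_D(3)[OF r that] by simp
  qed
qed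

lemma Peak_id: "Peak n id = {}"
  unfolding Peak_def by auto

lemma Peak_w0: "Peak n (w0 n) = {}"
proof -
  have "\<not> (w0 n (int i - 1) < w0 n (int i))" if "i \<in> {2..n-1}" for i
  proof -
    have "int i - 1 \<in> signed_dom n" "int i \<in> signed_dom n" using that dom_iff by auto
    then show ?thesis unfolding w0_def by simp
  qed
  then show ?thesis unfolding Peak_def by auto
qed

theorem corollary4p2:
  fixes n :: nat
  assumes "n \<ge> 2"
  shows "Max {dW n \<sigma> \<rho> | \<sigma> \<rho>. \<sigma> \<in> PB {} n \<and> \<rho> \<in> PB {} n} = n ^ 2"
proof -
  let ?S = "{dW n \<sigma> \<rho> | \<sigma> \<rho>. \<sigma> \<in> PB {} n \<and> \<rho> \<in> PB {} n}"
  have bound: "d \<le> n^2" if dS: "d \<in> ?S" for d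
  proof -
    obtain \<sigma> \<rho> where sr: "d = dW n \<sigma> \<rho>" "\<sigma> \<in> SB n" "\<rho> \<in> SB n"
      using dS unfolding PB_def by blast
    have "inv \<rho> \<circ> \<sigma> \<in> SB n" using SB_comp SB_inv sr by blast
    then show ?thesis using lenB_le sr(1) unfolding dW_def by blast
  qed
  have sub: "?S \<subseteq> {..n^2}"
  proof
    fix d assume "d \<in> ?S"
    then show "d \<in> {..n^2}" using bound by simp
  qed
  have fin: "finite ?S" by (rule finite_subset[OF sub]) simp
  have "dW n (w0 n) id = lenB n (w0 n)" unfolding dW_def by simp
  moreover have "lenB n (w0 n) = n^2"
    using lenB_le[OF w0_SB[of n]] lenB_ge[OF w0_SB[of n]] Phi_w0[of n] by linarith
  moreover have "w0 n \<in> PB {} n" "id \<in> PB {} n"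
    unfolding PB_def using w0_SB id_SB Peak_w0 Peak_id by auto
  ultimately have mem: "n^2 \<in> ?S" by (metis (mono_tags, lifting) mem_Collect_eq)
  show ?thesis by (rule Max_eqI[OF fin bound mem])
qed

end
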